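(* Let $i,j\geq 1$ be integers. For $n\geq 0$, let $U(i,j,n)$ be the set of all triples $(L_1,L_2,L_3)$ of walks of length $n$ with steps $(1,1)$ and $(1,-1)$, where $L_1$ starts at $(0,0)$, $L_2$ starts at $(0,2i)$ and $L_3$ starts at $(0,2i+2j)$. Let $V(i,j,n)$ be the set of triples in $U(i,j,n)$ whose three walks are pairwise nonintersecting, and for $\{a,b\}\in\{\{1,2\},\{2,3\},\{1,3\}\}$ let $W_{ab}(n)$ be the set of triples in $U(i,j,n)$ such that $L_a$ and $L_b$ do not intersect. Define $V_{i,j}(t)=\sum_{n\geq 0}|V(i,j,n)|t^n$ and $W_{ab}(t)=\sum_{n\geq0}|W_{ab}(n)|t^n$. Then $$V_{i,j}(t)=W_{12}(t)+W_{23}(t)-W_{13}(t).$$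
   Context: Two walks intersect if they share a common lattice point; otherwise they are nonintersecting. *)

theory Defs
  imports "HOL-Computational_Algebra.Formal_Power_Series"
begin

definition lattice_walk :: "int \<times> int \<Rightarrow> nat \<Rightarrow> (int \<times> int) list \<Rightarrow> bool" where
  "lattice_walk st n L \<longleftrightarrow> length L = Suc n \<and> L ! 0 = st \<and>
     (\<forall>k<n. fst (L ! Suc k) = fst (L ! k) + 1 \<and>
             (snd (L ! Suc k) = snd (L ! k) + 1 \<or> snd (L ! Suc k) = snd (L ! k) - 1))"

definition nonintersecting :: "(int \<times> int) list \<Rightarrow> (int \<times> int) list \<Rightarrow> bool" where
  "nonintersecting L L' \<longleftrightarrow> set L \<inter> set L' = {}"

type_synonym triple = "(int \<times> int) list \<times> (int \<times> int) list \<times> (int \<times> int) list"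

definition U :: "nat \<Rightarrow> nat \<Rightarrow> nat \<Rightarrow> triple set" where
  "U i j n = {(L1, L2, L3). lattice_walk (0, 0) n L1 \<and> lattice_walk (0, 2 * int i) n L2
                           \<and> lattice_walk (0, 2 * int i + 2 * int j) n L3}"

definition V :: "nat \<Rightarrow> nat \<Rightarrow> nat \<Rightarrow> triple set" where
  "V i j n = {(L1, L2, L3) \<in> U i j n. nonintersecting L1 L2 \<and> nonintersecting L2 L3
                                      \<and> nonintersecting L1 L3}"

definition W12 :: "nat \<Rightarrow> nat \<Rightarrow> nat \<Rightarrow> triple set" where
  "W12 i j n = {(L1, L2, L3) \<in> U i j n. nonintersecting L1 L2}"

definition W23 :: "nat \<Rightarrow> nat \<Rightarrow> nat \<Rightarrow> triple set" where
  "W23 i j n = {(L1, L2, L3) \<in> U i j n. nonintersecting L2 L3}"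

definition W13 :: "nat \<Rightarrow> nat \<Rightarrow> nat \<Rightarrow> triple set" where
  "W13 i j n = {(L1, L2, L3) \<in> U i j n. nonintersecting L1 L3}"

definition gf :: "(nat \<Rightarrow> 'a set) \<Rightarrow> int fps" where
  "gf S = Abs_fps (\<lambda>n. int (card (S n)))"

end

theory Submission
  imports Defs
begin

lemma walk_fst:
  assumes "lattice_walk (x,y) n L" "k \<le> n"
  shows "fst (L!k) = x + int k"
  using assms(2)
proof (induction k)
  case 0 then show ?case using assms(1) by (simp add: lattice_walk_def)
next
  case (Suc k) then show ?case using assms(1) unfolding lattice_walk_def by force
qed

lemma walk_par:
  assumes "lattice_walk (x,y) n L" "k \<le> n"
  shows "even (snd (L!k) - y - int k)"
  using assms(2)
proof (induction k)
  case 0 then show ?case using assms(1) by (simp add: lattice_walk_def)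
next
  case (Suc k)
  then have h: "even (snd (L!k) - y - int k)" by simp
  have "snd (L ! Suc k) = snd (L ! k) + 1 \<or> snd (L ! Suc k) = snd (L ! k) - 1"
    using assms(1) Suc.prems unfolding lattice_walk_def by auto
  then have "snd (L ! Suc k) - y - int (Suc k) = snd (L!k) - y - int k \<or>
     snd (L ! Suc k) - y - int (Suc k) = (snd (L!k) - y - int k) - 2" by auto
  then show ?case using h by (elim disjE) (simp_all only:, simp)
qed

lemma walk_step:
  assumes "lattice_walk st n L" "k < n"
  shows "\<bar>snd (L ! Suc k) - snd (L!k)\<bar> = 1"
  using assms unfolding lattice_walk_def by auto

lemma walk_bound:
  assumes "lattice_walk (x,y) n L" "k \<le> n"
  shows "\<bar>snd (L!k) - y\<bar> \<le> int k"
  using assms(2)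
proof (induction k)
  case 0 then show ?case using assms(1) by (simp add: lattice_walk_def)
next
  case (Suc k)
  then show ?case using walk_step[OF assms(1), of k] by auto
qed

lemma ivt:
  fixes d :: "nat \<Rightarrow> int"
  assumes "d 0 < 0" "\<forall>k<c. \<bar>d (Suc k) - d k\<bar> \<le> 2" "\<forall>k\<le>c. even (d k)" "d c \<ge> 0"
  shows "\<exists>k\<le>c. d k = 0"
  using assms
proof (induction c)
  case 0 then show ?case by simp
next
  case (Suc c)
  show ?case
  proof (cases "d (Suc c) = 0")
    case True then show ?thesis by blast
  next
    case False
    have "even (d (Suc c))" "d (Suc c) \<ge> 0" using Suc.prems by auto
    with False have "d (Suc c) \<ge> 2" by presburger
    then have "d c \<ge> 0" using Suc.prems(2) by force
    then obtain k where "k \<le> c" "d k = 0" using Suc by auto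
    then show ?thesis by (intro exI[of _ k]) auto
  qed
qed

lemma cross:
  assumes P: "lattice_walk (0,p) n P" and Q: "lattice_walk (0,q) n Q"
    and "even p" "even q" "p < q" "c \<le> n" "snd (P!c) \<ge> snd (Q!c)"
  shows "\<exists>k\<le>c. P!k = Q!k"
proof -
  define d where "d k = snd (P!k) - snd (Q!k)" for k
  have "d 0 < 0" using P Q assms(5) by (simp add: d_def lattice_walk_def)
  moreover have "\<forall>k<c. \<bar>d (Suc k) - d k\<bar> \<le> 2"
  proof (intro allI impI)
    fix k assume "k < c"
    then have "k < n" using assms(6) by simp
    then show "\<bar>d (Suc k) - d k\<bar> \<le> 2"
      using walk_step[OF P \<open>k<n\<close>] walk_step[OF Q \<open>k<n\<close>] unfolding d_def by linarith
  qed
  moreover have "\<forall>k\<le>c. even (d k)"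
  proof (intro allI impI)
    fix k assume "k \<le> c"
    then have "k \<le> n" using assms(6) by simp
    have "even ((snd (P!k) - p - int k) - (snd (Q!k) - q - int k) + p - q)"
      using walk_par[OF P \<open>k\<le>n\<close>] walk_par[OF Q \<open>k\<le>n\<close>] assms(3,4) by simp
    then show "even (d k)" unfolding d_def by simp
  qed
  moreover have "d c \<ge> 0" using assms(7) by (simp add: d_def)
  ultimately obtain k where k: "k \<le> c" "d k = 0" using ivt by blast
  then have "k \<le> n" using assms(6) by simp
  have "fst (P!k) = fst (Q!k)" using walk_fst[OF P \<open>k\<le>n\<close>] walk_fst[OF Q \<open>k\<le>n\<close>] by simp
  moreover have "snd (P!k) = snd (Q!k)" using k(2) by (simp add: d_def)
  ultimately show ?thesis using k(1) by (intro exI[of _ k]) (simp add: prod_eq_iff)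
qed

lemma below:
  assumes P: "lattice_walk (0,p) n P" and Q: "lattice_walk (0,q) n Q"
    and "even p" "even q" "p < q" "\<forall>k\<le>n. P!k \<noteq> Q!k" "c \<le> n"
  shows "snd (P!c) < snd (Q!c)"
proof (rule ccontr)
  assume "\<not> ?thesis"
  then obtain k where "k \<le> c" "P!k = Q!k" using cross[OF P Q assms(3-5,7)] by force
  then show False using assms(6,7) by auto
qed


definition M :: "nat \<Rightarrow> (int \<times> int) list \<Rightarrow> (int \<times> int) list \<Rightarrow> bool" where
  "M n P Q \<longleftrightarrow> (\<exists>k\<le>n. P!k = Q!k)"

definition fm :: "(int \<times> int) list \<Rightarrow> (int \<times> int) list \<Rightarrow> nat" where
  "fm P Q = (LEAST k. P!k = Q!k)"

definition sw :: "nat \<Rightarrow> 'a list \<Rightarrow> 'a list \<Rightarrow> 'a list" where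
  "sw a P Q = take a P @ drop a Q"

definition Phi :: "triple \<Rightarrow> triple" where
  "Phi t = (case t of (P,Q,R) \<Rightarrow> (sw (fm P Q) P Q, sw (fm P Q) Q P, R))"

lemma M_sym: "M n P Q = M n Q P"
  unfolding M_def by (auto simp: eq_commute)

lemma fm_sym: "fm P Q = fm Q P"
  unfolding fm_def by (simp add: eq_commute)

lemma fm_props:
  assumes "M n P Q"
  shows "fm P Q \<le> n" "P!(fm P Q) = Q!(fm P Q)" "\<And>k. k < fm P Q \<Longrightarrow> P!k \<noteq> Q!k"
proof -
  obtain k where k: "k \<le> n" "P!k = Q!k" using assms M_def by auto
  show "fm P Q \<le> n" unfolding fm_def using k by (meson Least_le order_trans)
  show "P!(fm P Q) = Q!(fm P Q)" unfolding fm_def using k(2) by (rule LeastI)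
  show "\<And>k. k < fm P Q \<Longrightarrow> P!k \<noteq> Q!k" unfolding fm_def by (rule not_less_Least)
qed

lemma fm_le: "P!k = Q!k \<Longrightarrow> fm P Q \<le> k"
  unfolding fm_def by (rule Least_le)

lemma sw_nth:
  assumes "a \<le> length P" "length P = length Q" "k < length Q"
  shows "sw a P Q ! k = (if k < a then P!k else Q!k)"
  using assms by (auto simp: sw_def nth_append min_def)

lemma sw_len:
  assumes "a \<le> length P" "length P = length Q"
  shows "length (sw a P Q) = length Q"
  using assms by (auto simp: sw_def min_def)

lemma fm_sw:
  assumes "M n P Q" "length P = Suc n" "length Q = Suc n"
  shows "fm (sw (fm P Q) P Q) (sw (fm P Q) Q P) = fm P Q"
proof -
  define a where "a = fm P Q"
  note f = fm_props[OF assms(1), folded a_def]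
  have s1: "\<And>k. k \<le> n \<Longrightarrow> sw a P Q ! k = (if k < a then P!k else Q!k)"
    by (rule sw_nth) (use f assms(2,3) in auto)
  have s2: "\<And>k. k \<le> n \<Longrightarrow> sw a Q P ! k = (if k < a then Q!k else P!k)"
    by (rule sw_nth) (use f assms(2,3) in auto)
  show ?thesis unfolding a_def[symmetric] unfolding fm_def
  proof (rule Least_equality)
    show "sw a P Q ! a = sw a Q P ! a" using s1 s2 f by simp
    fix y assume "sw a P Q ! y = sw a Q P ! y"
    then show "a \<le> y" using s1[of y] s2[of y] f by (metis leI less_imp_le_nat order_trans)
  qed
qed

lemma Phi_Phi:
  assumes "M n P Q" "length P = Suc n" "length Q = Suc n"
  shows "Phi (Phi (P,Q,R)) = (P,Q,R)"
proof -
  define a where "a = fm P Q"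
  note f = fm_props[OF assms(1), folded a_def]
  have "fm (sw a P Q) (sw a Q P) = a" using fm_sw[OF assms] a_def by simp
  then have "Phi (Phi (P,Q,R)) = (sw a (sw a P Q) (sw a Q P), sw a (sw a Q P) (sw a P Q), R)"
    unfolding Phi_def a_def by (simp add: fm_sym[of "sw (fm P Q) Q P"])
  moreover have "sw a (sw a P Q) (sw a Q P) = P" "sw a (sw a Q P) (sw a P Q) = Q"
    using f assms(2,3) by (simp_all add: sw_def min_def)
  ultimately show ?thesis by simp
qed

lemma XY:
  assumes lP: "length P = Suc n" and lQ: "length Q = Suc n"
    and m12: "M n P Q" and m23: "M n Q R" and n13: "\<not> M n P R" and lt: "fm P Q < fm Q R"
  shows "M n (sw (fm P Q) P Q) R \<and> \<not> M n (sw (fm P Q) Q P) R"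
proof -
  define a where "a = fm P Q"
  define b where "b = fm Q R"
  note fa = fm_props[OF m12, folded a_def]
  note fb = fm_props[OF m23, folded b_def]
  have s1: "\<And>k. k \<le> n \<Longrightarrow> sw a P Q ! k = (if k < a then P!k else Q!k)"
    by (rule sw_nth) (use fa lP lQ in auto)
  have s2: "\<And>k. k \<le> n \<Longrightarrow> sw a Q P ! k = (if k < a then Q!k else P!k)"
    by (rule sw_nth) (use fa lP lQ in auto)
  have "a < b" using lt a_def b_def by simp
  have "M n (sw a P Q) R" unfolding M_def
    using s1[of b] fb \<open>a<b\<close> by (intro exI[of _ b]) auto
  moreover have "\<not> M n (sw a Q P) R" unfolding M_def
  proof
    assume "\<exists>k\<le>n. sw a Q P ! k = R ! k"
    then obtain k where k: "k \<le> n" "sw a Q P ! k = R ! k" by blast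
    show False
    proof (cases "k < a")
      case True then show ?thesis using k s2[of k] fb(3)[of k] \<open>a<b\<close> by simp
    next
      case False then show ?thesis using k s2[of k] n13 unfolding M_def by auto
    qed
  qed
  ultimately show ?thesis unfolding a_def by simp
qed

lemma YX:
  assumes lP: "length P = Suc n" and lQ: "length Q = Suc n"
    and m13: "M n P R" and n23: "\<not> M n Q R"
    and H: "\<forall>c\<le>n. P!c = R!c \<longrightarrow> (\<exists>k\<le>c. P!k = Q!k)"
  shows "M n P Q \<and> M n (sw (fm P Q) P Q) (sw (fm P Q) Q P) \<and> M n (sw (fm P Q) Q P) R
    \<and> \<not> M n (sw (fm P Q) P Q) R
    \<and> fm (sw (fm P Q) P Q) (sw (fm P Q) Q P) < fm (sw (fm P Q) Q P) R"
proof -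
  obtain c where c: "c \<le> n" "P!c = R!c" using m13 M_def by auto
  then obtain k where k: "k \<le> c" "P!k = Q!k" using H by blast
  have m12: "M n P Q" using k c unfolding M_def by (intro exI[of _ k]) auto
  define a where "a = fm P Q"
  note fa = fm_props[OF m12, folded a_def]
  have "a \<le> k" using fm_le[OF k(2)] a_def by simp
  have s1: "\<And>k. k \<le> n \<Longrightarrow> sw a P Q ! k = (if k < a then P!k else Q!k)"
    by (rule sw_nth) (use fa lP lQ in auto)
  have s2: "\<And>k. k \<le> n \<Longrightarrow> sw a Q P ! k = (if k < a then Q!k else P!k)"
    by (rule sw_nth) (use fa lP lQ in auto)
  have fs: "fm (sw a P Q) (sw a Q P) = a" using fm_sw[OF m12 lP lQ] a_def by simp
  have "a \<noteq> c"
  proof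
    assume "a = c"
    then have "Q!a = R!a" using fa c by simp
    then show False using n23 fa(1) unfolding M_def by auto
  qed
  then have "a < c" using \<open>a \<le> k\<close> k(1) by simp
  have m12': "M n (sw a P Q) (sw a Q P)" unfolding M_def
    using s1[of a] s2[of a] fa by (intro exI[of _ a]) auto
  have m23': "M n (sw a Q P) R" unfolding M_def
    using s2[of c] c \<open>a<c\<close> by (intro exI[of _ c]) auto
  have n13': "\<not> M n (sw a P Q) R" unfolding M_def
  proof
    assume "\<exists>k\<le>n. sw a P Q ! k = R ! k"
    then obtain k where k: "k \<le> n" "sw a P Q ! k = R ! k" by blast
    show False
    proof (cases "k < a")
      case True
      then have "P!k = R!k" using k s1[of k] by simp
      then obtain k' where "k' \<le> k" "P!k' = Q!k'" using H k(1) by blast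
      then show ?thesis using fa(3)[of k'] True by simp
    next
      case False then show ?thesis using k s1[of k] n23 unfolding M_def by auto
    qed
  qed
  define b where "b = fm (sw a Q P) R"
  note fb = fm_props[OF m23', folded b_def]
  have "a < b"
  proof (rule ccontr)
    assume "\<not> a < b"
    then consider "b < a" | "b = a" by linarith
    then show False
    proof cases
      case 1 then show ?thesis using fb s2[of b] n23 unfolding M_def by auto
    next
      case 2 then show ?thesis using fb s2[of b] fa n23 unfolding M_def by auto
    qed
  qed
  show ?thesis using m12 m12' m23' n13' fs \<open>a<b\<close> unfolding a_def[symmetric] b_def by simp
qed

lemma abstract_bij:
  assumes len: "\<forall>(P,Q,R)\<in>S. length P = Suc n \<and> length Q = Suc n"
    and clo: "\<forall>(P,Q,R)\<in>S. M n P Q \<longrightarrow> Phi (P,Q,R) \<in> S"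
    and H: "\<forall>(P,Q,R)\<in>S. \<not> M n Q R \<longrightarrow> (\<forall>c\<le>n. P!c = R!c \<longrightarrow> (\<exists>k\<le>c. P!k = Q!k))"
  shows "card {(P,Q,R)\<in>S. M n P Q \<and> M n Q R \<and> \<not> M n P R \<and> fm P Q < fm Q R}
       = card {(P,Q,R)\<in>S. M n P R \<and> \<not> M n Q R}"
proof -
  define X where "X = {(P,Q,R)\<in>S. M n P Q \<and> M n Q R \<and> \<not> M n P R \<and> fm P Q < fm Q R}"
  define Y where "Y = {(P,Q,R)\<in>S. M n P R \<and> \<not> M n Q R}"
  have XY': "Phi t \<in> Y \<and> Phi (Phi t) = t" if "t \<in> X" for t
  proof -
    obtain P Q R where t: "t = (P,Q,R)" by (cases t)
    have l: "length P = Suc n" "length Q = Suc n" using len that t X_def by auto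
    have h: "M n P Q" "M n Q R" "\<not> M n P R" "fm P Q < fm Q R" "(P,Q,R) \<in> S"
      using that t X_def by auto
    have "Phi (P,Q,R) \<in> S" using clo h by auto
    then show ?thesis using XY[OF l h(1-4)] Phi_Phi[OF h(1) l] unfolding t Y_def
      by (simp add: Phi_def)
  qed
  have YX': "Phi t \<in> X \<and> Phi (Phi t) = t" if "t \<in> Y" for t
  proof -
    obtain P Q R where t: "t = (P,Q,R)" by (cases t)
    have l: "length P = Suc n" "length Q = Suc n" using len that t Y_def by auto
    have h: "M n P R" "\<not> M n Q R" "(P,Q,R) \<in> S"
      using that t Y_def by auto
    have HH: "\<forall>c\<le>n. P!c = R!c \<longrightarrow> (\<exists>k\<le>c. P!k = Q!k)" using H h by auto
    note r = YX[OF l h(1,2) HH]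
    have "Phi (P,Q,R) \<in> S" using clo h r by auto
    then show ?thesis using r Phi_Phi[of n P Q R] l unfolding t X_def
      by (simp add: Phi_def)
  qed
  have "inj_on Phi X" by (rule inj_on_inverseI[of _ Phi]) (use XY' in auto)
  moreover have "Phi ` X = Y"
  proof
    show "Phi ` X \<subseteq> Y" using XY' by auto
    show "Y \<subseteq> Phi ` X" using YX' by (metis image_eqI subsetI)
  qed
  ultimately show ?thesis unfolding X_def[symmetric] Y_def[symmetric] using card_image by metis
qed


lemma sw_walk:
  assumes P: "lattice_walk st n P" and Q: "lattice_walk st' n Q" and "a \<le> n" "P!a = Q!a"
  shows "lattice_walk st n (sw a P Q)"
proof -
  have lP: "length P = Suc n" and lQ: "length Q = Suc n" using P Q lattice_walk_def by auto
  have s: "\<And>k. k \<le> n \<Longrightarrow> sw a P Q ! k = (if k < a then P!k else Q!k)"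
    by (rule sw_nth) (use lP lQ assms(3) in auto)
  have "length (sw a P Q) = Suc n" using sw_len[of a P Q] lP lQ assms(3) by simp
  moreover have "sw a P Q ! 0 = st"
    using s[of 0] P assms(4) unfolding lattice_walk_def by (cases "a = 0") auto
  moreover have "fst (sw a P Q ! Suc k) = fst (sw a P Q ! k) + 1 \<and>
             (snd (sw a P Q ! Suc k) = snd (sw a P Q ! k) + 1 \<or> snd (sw a P Q ! Suc k) = snd (sw a P Q ! k) - 1)"
    if "k < n" for k
  proof -
    have sP: "fst (P ! Suc k) = fst (P ! k) + 1 \<and>
             (snd (P ! Suc k) = snd (P ! k) + 1 \<or> snd (P ! Suc k) = snd (P ! k) - 1)"
      using P that unfolding lattice_walk_def by blast
    have sQ: "fst (Q ! Suc k) = fst (Q ! k) + 1 \<and>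
             (snd (Q ! Suc k) = snd (Q ! k) + 1 \<or> snd (Q ! Suc k) = snd (Q ! k) - 1)"
      using Q that unfolding lattice_walk_def by blast
    consider "Suc k < a" | "Suc k = a" | "a \<le> k" by linarith
    then show ?thesis
    proof cases
      case 1 then show ?thesis using s[of k] s[of "Suc k"] that sP by simp
    next
      case 2 then show ?thesis using s[of k] s[of "Suc k"] that sP assms(4) by simp
    next
      case 3 then show ?thesis using s[of k] s[of "Suc k"] that sQ by simp
    qed
  qed
  ultimately show ?thesis unfolding lattice_walk_def by blast
qed

lemma nonint_iff:
  assumes P: "lattice_walk (0,y) n P" and Q: "lattice_walk (0,y') n Q"
  shows "nonintersecting P Q \<longleftrightarrow> \<not> M n P Q"
proof -
  have lP: "length P = Suc n" and lQ: "length Q = Suc n" using P Q lattice_walk_def by auto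
  have "(set P \<inter> set Q \<noteq> {}) \<longleftrightarrow> M n P Q"
  proof
    assume "set P \<inter> set Q \<noteq> {}"
    then obtain p where p: "p \<in> set P" "p \<in> set Q" by blast
    obtain k where k1: "k < Suc n" "P!k = p" using p(1) lP by (auto simp: in_set_conv_nth)
    obtain k' where k2: "k' < Suc n" "Q!k' = p" using p(2) lQ by (auto simp: in_set_conv_nth)
    have k: "k < Suc n" "k' < Suc n" "P!k = Q!k'" using k1 k2 by auto
    then have "int k = int k'" using walk_fst[OF P, of k] walk_fst[OF Q, of k'] by simp
    then show "M n P Q" using k unfolding M_def by (intro exI[of _ k]) auto
  next
    assume "M n P Q"
    then obtain k where "k \<le> n" "P!k = Q!k" unfolding M_def by blast
    then show "set P \<inter> set Q \<noteq> {}" using lP lQ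
      by (metis disjoint_iff le_imp_less_Suc nth_mem)
  qed
  then show ?thesis unfolding nonintersecting_def by blast
qed

lemma finite_walks: "finite {L. lattice_walk (x,y) n L}"
proof -
  let ?A = "{x..x + int n} \<times> {y - int n..y + int n}"
  have "{L. lattice_walk (x,y) n L} \<subseteq> {L. set L \<subseteq> ?A \<and> length L = Suc n}"
  proof (rule subsetI, rule CollectI, rule conjI)
    fix L assume "L \<in> {L. lattice_walk (x,y) n L}"
    then have L: "lattice_walk (x,y) n L" by simp
    then show "length L = Suc n" by (simp add: lattice_walk_def)
    show "set L \<subseteq> ?A"
    proof
      fix p assume "p \<in> set L"
      then obtain k where k: "k < Suc n" "L!k = p" using L unfolding lattice_walk_def
        by (auto simp: in_set_conv_nth)
      then have "k \<le> n" by simp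
      from walk_fst[OF L this] walk_bound[OF L this] k show "p \<in> ?A" by (cases p) auto
    qed
  qed
  moreover have "finite {L. set L \<subseteq> ?A \<and> length L = Suc n}"
    by (rule finite_lists_length_eq) simp
  ultimately show ?thesis by (rule finite_subset)
qed

lemma finite_U: "finite (U i j n)"
proof -
  have "U i j n \<subseteq> {L. lattice_walk (0,0) n L} \<times> {L. lattice_walk (0,2 * int i) n L}
      \<times> {L. lattice_walk (0, 2 * int i + 2 * int j) n L}" unfolding U_def by auto
  then show ?thesis using finite_walks by (meson finite_SigmaI finite_subset)
qed

definition rot :: "triple \<Rightarrow> triple" where "rot t = (case t of (a,b,c) \<Rightarrow> (c,b,a))"

lemma rot_rot[simp]: "rot (rot t) = t" by (cases t) (auto simp: rot_def)
lemma inj_rot: "inj rot" by (metis injI rot_rot)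
lemma rot_simp[simp]: "rot (a,b,c) = (c,b,a)" by (simp add: rot_def)

lemma rot_set: "{(P,Q,R)\<in>rot ` S. f P Q R} = rot ` {(a,b,c)\<in>S. f c b a}"
proof
  show "{(P,Q,R)\<in>rot ` S. f P Q R} \<subseteq> rot ` {(a,b,c)\<in>S. f c b a}"
    by (auto simp: image_iff)
  show "rot ` {(a,b,c)\<in>S. f c b a} \<subseteq> {(P,Q,R)\<in>rot ` S. f P Q R}"
    by auto
qed


lemma rot_memI: "rot x \<in> S \<Longrightarrow> x \<in> rot ` S" by (metis image_eqI rot_rot)

lemma U_mem: "(L1,L2,L3) \<in> U i j n \<longleftrightarrow> lattice_walk (0,0) n L1 \<and> lattice_walk (0, 2 * int i) n L2
   \<and> lattice_walk (0, 2 * int i + 2 * int j) n L3" by (simp add: U_def)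

lemma HU:
  assumes "i \<ge> 1" "j \<ge> 1" "(P,Q,R) \<in> U i j n" "\<not> M n Q R" "c \<le> n" "P!c = R!c"
  shows "\<exists>k\<le>c. P!k = Q!k"
proof -
  have w: "lattice_walk (0,0) n P" "lattice_walk (0, 2 * int i) n Q"
     "lattice_walk (0, 2 * int i + 2 * int j) n R" using assms(3) U_mem by auto
  have "snd (Q!c) < snd (R!c)"
    by (rule below[OF w(2) w(3)]) (use assms in \<open>auto simp: M_def\<close>)
  then show ?thesis using cross[OF w(1) w(2), of c] assms by simp
qed

lemma HS:
  assumes "i \<ge> 1" "j \<ge> 1" "(L1,L2,L3) \<in> U i j n" "\<not> M n L2 L1" "c \<le> n" "L3!c = L1!c"
  shows "\<exists>k\<le>c. L3!k = L2!k"
proof -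
  have w: "lattice_walk (0,0) n L1" "lattice_walk (0, 2 * int i) n L2"
     "lattice_walk (0, 2 * int i + 2 * int j) n L3" using assms(3) U_mem by auto
  have "snd (L1!c) < snd (L2!c)"
    by (rule below[OF w(1) w(2)]) (use assms in \<open>auto simp: M_def\<close>)
  then obtain k where "k \<le> c" "L2!k = L3!k" using cross[OF w(2) w(3), of c] assms by force
  then show ?thesis by auto
qed

lemma count_eq:
  assumes i: "i \<ge> 1" and j: "j \<ge> 1"
  shows "int (card (V i j n)) = int (card (W12 i j n)) + int (card (W23 i j n)) - int (card (W13 i j n))"
proof -
  define U' where "U' = U i j n"
  have fin: "finite U'" unfolding U'_def by (rule finite_U)
  have w: "lattice_walk (0,0) n L1" "lattice_walk (0, 2 * int i) n L2"
     "lattice_walk (0, 2 * int i + 2 * int j) n L3" if "(L1,L2,L3) \<in> U'" for L1 L2 L3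
    using that U_mem unfolding U'_def by auto
  have len: "length L1 = Suc n" "length L2 = Suc n" "length L3 = Suc n" if "(L1,L2,L3) \<in> U'" for L1 L2 L3
    using w[OF that] lattice_walk_def by auto
  have F1: "M n L1 L2 \<or> M n L2 L3" if hh: "(L1,L2,L3) \<in> U'" "M n L1 L3" for L1 L2 L3
  proof (rule ccontr)
    assume "\<not> ?thesis"
    then have "\<not> M n L2 L3" "\<not> M n L1 L2" by auto
    obtain c where "c \<le> n" "L1!c = L3!c" using hh(2) M_def by auto
    then obtain k where "k \<le> c" "L1!k = L2!k" using HU[OF i j, of L1 L2 L3 n c] hh(1) \<open>\<not> M n L2 L3\<close>
      unfolding U'_def by auto
    then show False using \<open>\<not> M n L1 L2\<close> \<open>c \<le> n\<close> unfolding M_def by auto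
  qed
  have V: "V i j n = {(a,b,c)\<in>U'. \<not> M n a b \<and> \<not> M n b c}"
    unfolding V_def U'_def[symmetric] using F1 nonint_iff w by blast
  have W12: "W12 i j n = {(a,b,c)\<in>U'. \<not> M n a b}"
    unfolding W12_def U'_def[symmetric] using nonint_iff w by blast
  have W23: "W23 i j n = {(a,b,c)\<in>U'. \<not> M n b c}"
    unfolding W23_def U'_def[symmetric] using nonint_iff w by blast
  have W13: "W13 i j n = {(a,b,c)\<in>U'. \<not> M n a c}"
    unfolding W13_def U'_def[symmetric] using nonint_iff w by blast
  define A where "A = {(a,b,c)\<in>U'. M n a b \<and> M n b c}"
  define B where "B = {(a,b,c)\<in>U'. M n a c}"
  define AB where "AB = {(a,b,c)\<in>U'. M n a b \<and> M n b c \<and> M n a c}"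
  define X where "X = {(a,b,c)\<in>U'. M n a b \<and> M n b c \<and> \<not> M n a c \<and> fm a b < fm b c}"
  define X2 where "X2 = {(a,b,c)\<in>U'. M n a b \<and> M n b c \<and> \<not> M n a c \<and> fm b c < fm a b}"
  define Y where "Y = {(a,b,c)\<in>U'. M n a c \<and> \<not> M n b c}"
  define Y2 where "Y2 = {(a,b,c)\<in>U'. M n a c \<and> \<not> M n a b}"
  have neq: "fm a b \<noteq> fm b c" if "(a,b,c) \<in> U'" "M n a b" "M n b c" "\<not> M n a c" for a b c
  proof
    assume e: "fm a b = fm b c"
    have "a ! fm a b = c ! fm a b" using fm_props(2)[OF that(2)] fm_props(2)[OF that(3)] e by simp
    then show False using that(4) fm_props(1)[OF that(2)] unfolding M_def by auto
  qed
  have A_eq: "A = AB \<union> X \<union> X2" unfolding A_def AB_def X_def X2_def using neq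
    by (auto dest: nat_neq_iff[THEN iffD1])
  have B_eq: "B = AB \<union> Y \<union> Y2" unfolding B_def AB_def Y_def Y2_def using F1 by auto
  have finS: "finite AB" "finite X" "finite X2" "finite Y" "finite Y2"
    unfolding AB_def X_def X2_def Y_def Y2_def by ((rule finite_subset[OF _ fin]), auto)+
  have cA: "card A = card AB + card X + card X2"
    unfolding A_eq using finS
    by (subst card_Un_disjoint; (auto simp: AB_def X_def X2_def)?)
       (subst card_Un_disjoint; auto simp: AB_def X_def X2_def)
  have cB: "card B = card AB + card Y + card Y2"
    unfolding B_eq using finS F1
    by (subst card_Un_disjoint; (auto simp: AB_def Y_def Y2_def)?)
       (subst card_Un_disjoint; auto simp: AB_def Y_def Y2_def)
  have cXY: "card X = card Y" unfolding X_def Y_def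
  proof (rule abstract_bij)
    show "\<forall>(P,Q,R)\<in>U'. length P = Suc n \<and> length Q = Suc n" using len by auto
    show "\<forall>(P,Q,R)\<in>U'. M n P Q \<longrightarrow> Phi (P,Q,R) \<in> U'"
    proof (clarify)
      fix P Q R assume h: "(P,Q,R) \<in> U'" "M n P Q"
      note f = fm_props[OF h(2)]
      have "sw (fm P Q) P Q \<in> {L. lattice_walk (0,0) n L}"
        using sw_walk[OF w(1)[OF h(1)] w(2)[OF h(1)] f(1,2)] by simp
      moreover have "lattice_walk (0, 2 * int i) n (sw (fm P Q) Q P)"
        using sw_walk[OF w(2)[OF h(1)] w(1)[OF h(1)] f(1)] f(2) by simp
      ultimately show "Phi (P,Q,R) \<in> U'" using w(3)[OF h(1)]
        unfolding Phi_def U'_def by (simp add: U_mem)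
    qed
    show "\<forall>(P,Q,R)\<in>U'. \<not> M n Q R \<longrightarrow> (\<forall>c\<le>n. P!c = R!c \<longrightarrow> (\<exists>k\<le>c. P!k = Q!k))"
      using HU[OF i j] unfolding U'_def by blast
  qed
  define S where "S = rot ` U'"
  have cXY2: "card {(P,Q,R)\<in>S. M n P Q \<and> M n Q R \<and> \<not> M n P R \<and> fm P Q < fm Q R}
       = card {(P,Q,R)\<in>S. M n P R \<and> \<not> M n Q R}"
  proof (rule abstract_bij)
    show "\<forall>(P,Q,R)\<in>S. length P = Suc n \<and> length Q = Suc n" using len unfolding S_def by auto
    show "\<forall>(P,Q,R)\<in>S. M n P Q \<longrightarrow> Phi (P,Q,R) \<in> S"
    proof (clarify)
      fix P Q R assume h0: "(P,Q,R) \<in> S" "M n P Q"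
      then have h: "(R,Q,P) \<in> U'" unfolding S_def by (auto simp: image_iff)
      note f = fm_props[OF h0(2)]
      have "lattice_walk (0, 2 * int i + 2 * int j) n (sw (fm P Q) P Q)"
        using sw_walk[OF w(3)[OF h] w(2)[OF h] f(1,2)] by simp
      moreover have "lattice_walk (0, 2 * int i) n (sw (fm P Q) Q P)"
        using sw_walk[OF w(2)[OF h] w(3)[OF h] f(1)] f(2) by simp
      ultimately show "Phi (P,Q,R) \<in> S" using w(1)[OF h]
        unfolding Phi_def S_def U'_def by (intro rot_memI) (simp add: U_mem)
    qed
    show "\<forall>(P,Q,R)\<in>S. \<not> M n Q R \<longrightarrow> (\<forall>c\<le>n. P!c = R!c \<longrightarrow> (\<exists>k\<le>c. P!k = Q!k))"
    proof (clarify)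
      fix P Q R c assume h0: "(P,Q,R) \<in> S" "\<not> M n Q R" "c \<le> n" "P!c = R!c"
      then have h: "(R,Q,P) \<in> U'" unfolding S_def by (auto simp: image_iff)
      show "\<exists>k\<le>c. P!k = Q!k" using HS[OF i j _ h0(2-4)] h unfolding U'_def by blast
    qed
  qed
  have "{(P,Q,R)\<in>S. M n P Q \<and> M n Q R \<and> \<not> M n P R \<and> fm P Q < fm Q R} = rot ` X2"
    unfolding S_def rot_set X2_def by (simp add: M_sym fm_sym) (rule arg_cong[where f="image rot"], auto)
  moreover have "{(P,Q,R)\<in>S. M n P R \<and> \<not> M n Q R} = rot ` Y2"
    unfolding S_def rot_set Y2_def by (simp add: M_sym)
  ultimately have cXY2': "card X2 = card Y2" using cXY2 card_image[OF inj_on_subset[OF inj_rot]]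
    by (metis subset_UNIV)
  have cAB: "card A = card B" using cA cB cXY cXY2' by simp
  have un: "W12 i j n \<union> W23 i j n = U' - A" unfolding W12 W23 A_def by auto
  have it: "W12 i j n \<inter> W23 i j n = V i j n" unfolding W12 W23 V by auto
  have w13: "W13 i j n = U' - B" unfolding W13 B_def by auto
  have finW: "finite (W12 i j n)" "finite (W23 i j n)" unfolding W12 W23 by ((rule finite_subset[OF _ fin]), auto)+
  have "card (W12 i j n) + card (W23 i j n) = card (U' - A) + card (V i j n)"
    using card_Un_Int[OF finW] un it by simp
  moreover have "card (U' - A) = card (W13 i j n)"
  proof -
    have "A \<subseteq> U'" "B \<subseteq> U'" unfolding A_def B_def by auto
    then have "card (U' - A) = card U' - card A" "card (U' - B) = card U' - card B"
      using fin by (auto intro: card_Diff_subset finite_subset)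
    then show ?thesis using cAB w13 by simp
  qed
  ultimately show ?thesis by simp
qed

theorem proposition2p2:
  fixes i j :: nat
  assumes "i \<ge> 1" and "j \<ge> 1"
  shows "gf (V i j) = gf (W12 i j) + gf (W23 i j) - gf (W13 i j)"
  by (rule fps_ext) (simp add: gf_def count_eq[OF assms])

end
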